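(* Let $n$ be a positive integer and $0<\phi<\infty$. For integers $r,k\ge 0$ with $k+r\le n$ define $$L(r,k) = \log\binom{n}{k+r} + (n-k-r)\log\phi + \log S(k+r,k),$$ with $\log 0 = -\infty$. Then $L(0,0)=n\log\phi$; $L(r,0)=-\infty$ for $1\le r\le n$; $L(0,k)=\log\binom{n}{k}+(n-k)\log\phi$ for $0\le k\le n$; and for all integers $r\ge1$, $k\ge1$ with $k+r\le n$, $$L(r,k) = \log(n-k-r+1) - \log(k+r) - \log\phi + \mathrm{logsumexp}\big(\log k + L(r-1,k),\ L(r,k-1)\big).$$ Furthermore, for $0\le k\le n$ and $0\le r\le n-k$, $$\log \mathrm{Spillage}(r\mid n,k,\phi) = L(r,k) - \mathrm{logsumexp}\big(L(0,k),\dots,L(n-k,k)\big).$$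
   Context: $S(j,k)$ denotes the (central) Stirling numbers of the second kind (with $S(0,0)=1$, $S(j,0)=0$ for $j\ge1$). $\mathrm{logsumexp}(a_1,\dots,a_p) = \log\sum_{i=1}^p e^{a_i}$, with $e^{-\infty}=0$. The noncentral Stirling numbers of the second kind are $S(n,k,\phi) = \sum_{r=0}^{n-k}\binom{n}{k+r}\phi^{n-k-r}S(k+r,k)$, and the spillage mass function is $\mathrm{Spillage}(r\mid n,k,\phi) = \binom{n}{k+r}\phi^{n-k-r}S(k+r,k)/S(n,k,\phi)$ for $r=0,\dots,n-k$. *)

theory Defs
  imports "HOL-Combinatorics.Stirling" "HOL-Library.Extended_Real"
begin

definition elog :: "real \<Rightarrow> ereal" where
  "elog x = (if x > 0 then ereal (ln x) else -\<infinity>)"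

text \<open>Exponential on extended reals with exp(-infinity) = 0
  (the value at +infinity is irrelevant here).\<close>
definition eexp :: "ereal \<Rightarrow> real" where
  "eexp a = (case a of ereal x \<Rightarrow> exp x | _ \<Rightarrow> 0)"

definition logsumexp :: "ereal list \<Rightarrow> ereal" where
  "logsumexp as = elog (sum_list (map eexp as))"

definition ncStirling :: "nat \<Rightarrow> nat \<Rightarrow> real \<Rightarrow> real" where
  "ncStirling n k \<phi> =
     (\<Sum>r=0..n-k. real (n choose (k+r)) * \<phi> ^ (n-k-r) * real (Stirling (k+r) k))"

definition Spillage :: "nat \<Rightarrow> nat \<Rightarrow> nat \<Rightarrow> real \<Rightarrow> real" where
  "Spillage r n k \<phi> =
     real (n choose (k+r)) * \<phi> ^ (n-k-r) * real (Stirling (k+r) k) / ncStirling n k \<phi>"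

definition Lfun :: "nat \<Rightarrow> real \<Rightarrow> nat \<Rightarrow> nat \<Rightarrow> ereal" where
  "Lfun n \<phi> r k = elog (real (n choose (k+r))) + ereal (real (n-k-r) * ln \<phi>)
                   + elog (real (Stirling (k+r) k))"

end

theory Submission
  imports Defs
begin

definition TT :: "nat \<Rightarrow> real \<Rightarrow> nat \<Rightarrow> nat \<Rightarrow> real" where
  "TT n \<phi> r k = real (n choose (k+r)) * \<phi> ^ (n-k-r) * real (Stirling (k+r) k)"

lemma elog_mult: "x \<ge> 0 \<Longrightarrow> y \<ge> 0 \<Longrightarrow> elog (x*y) = elog x + elog y"
  by (cases "x = 0"; cases "y = 0") (auto simp: elog_def ln_mult)

lemma elog_pow: "\<phi> > 0 \<Longrightarrow> elog (\<phi> ^ m) = ereal (real m * ln \<phi>)"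
  by (simp add: elog_def ln_realpow)

lemma elog_exp: "elog (exp c) = ereal c"
  by (simp add: elog_def)

lemma eexp_elog: "x \<ge> 0 \<Longrightarrow> eexp (elog x) = x"
  by (cases "x = 0") (auto simp: elog_def eexp_def)

lemma TT_nonneg: "\<phi> > 0 \<Longrightarrow> TT n \<phi> r k \<ge> 0"
  by (simp add: TT_def)

lemma L_eq: "\<phi> > 0 \<Longrightarrow> Lfun n \<phi> r k = elog (TT n \<phi> r k)"
  unfolding Lfun_def TT_def
  by (simp add: elog_mult elog_pow)

lemma binom_aux: "Suc j \<le> n \<Longrightarrow>
   real (n choose Suc j) * real (Suc j) = real (n choose j) * real (n - j)"
proof -
  assume "Suc j \<le> n"
  have "Suc j * (n choose Suc j) = n * ((n-1) choose j)" by (rule binomial_absorption)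
  also have "\<dots> = (n choose j) * (n - j)" by (metis binomial_absorb_comp mult.commute)
  finally have "(n choose Suc j) * Suc j = (n choose j) * (n - j)" by (simp add: mult.commute)
  then show ?thesis by (metis of_nat_mult)
qed

lemma TT_rec:
  assumes "\<phi> > 0" "k + r \<le> n" "r \<ge> 1" "k \<ge> 1"
  shows "TT n \<phi> r k = (real (n-k-r+1) / (real (k+r) * \<phi>)) *
     (real k * TT n \<phi> (r-1) k + TT n \<phi> r (k-1))"
proof -
  obtain k' r' where kr: "k = Suc k'" "r = Suc r'" using assms by (metis Suc_le_D One_nat_def)
  define j where "j = Suc (k' + r')"
  have jn: "Suc j \<le> n" using assms kr j_def by simp
  have e1: "k + r = Suc j" "k + (r-1) = j" "(k-1) + r = j" using kr j_def by auto
  have e2: "n - k - (r-1) = n - j" "n - (k-1) - r = n - j" "n - k - r = n - Suc j"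
    using kr j_def by auto
  have e3: "n - j = Suc (n - Suc j)" using jn by simp
  have e4: "n-k-r+1 = n - j" using e2 e3 by simp
  have "Stirling (Suc j) (Suc k') = Suc k' * Stirling j (Suc k') + Stirling j k'" by simp
  then have St: "real (Stirling (Suc j) k) = real k * real (Stirling j k) + real (Stirling j k')"
    using kr by (metis of_nat_add of_nat_mult)
  have B: "real (n choose Suc j) * real (Suc j) = real (n choose j) * real (n - j)"
    by (rule binom_aux[OF jn])
  have "real k * TT n \<phi> (r-1) k + TT n \<phi> r (k-1)
     = real (n choose j) * \<phi> ^ (n - j) * real (Stirling (Suc j) k)"
    unfolding TT_def e1 e2 St using kr by (simp add: algebra_simps)
  also have "\<dots> = real (n choose j) * \<phi> * \<phi> ^ (n - Suc j) * real (Stirling (Suc j) k)"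
    by (simp add: e3)
  finally have X: "real k * TT n \<phi> (r-1) k + TT n \<phi> r (k-1)
     = real (n choose j) * \<phi> * \<phi> ^ (n - Suc j) * real (Stirling (Suc j) k)" .
  have "(real (n-k-r+1) / (real (k+r) * \<phi>)) * (real k * TT n \<phi> (r-1) k + TT n \<phi> r (k-1))
     = (real (n choose j) * real (n - j)) * \<phi> ^ (n - Suc j) * real (Stirling (Suc j) k) / real (Suc j)"
    unfolding X e4 e1 using assms by (simp add: field_simps del: of_nat_Suc)
  also have "\<dots> = real (n choose Suc j) * \<phi> ^ (n - Suc j) * real (Stirling (Suc j) k)"
    unfolding B[symmetric] by (simp add: field_simps del: of_nat_Suc)
  also have "\<dots> = TT n \<phi> r k" unfolding TT_def e1 e2 ..
  finally show ?thesis by simp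
qed

theorem theorem5:
  fixes n :: nat and \<phi> :: real
  assumes "n \<ge> 1" and "0 < \<phi>"
  shows "Lfun n \<phi> 0 0 = ereal (real n * ln \<phi>) \<and>
    (\<forall>r. 1 \<le> r \<and> r \<le> n \<longrightarrow> Lfun n \<phi> r 0 = -\<infinity>) \<and>
    (\<forall>k. k \<le> n \<longrightarrow>
           Lfun n \<phi> 0 k = ereal (ln (real (n choose k)) + real (n-k) * ln \<phi>)) \<and>
    (\<forall>r k. 1 \<le> r \<and> 1 \<le> k \<and> k + r \<le> n \<longrightarrow>
           Lfun n \<phi> r k = ereal (ln (real (n-k-r+1)) - ln (real (k+r)) - ln \<phi>)
             + logsumexp [ereal (ln (real k)) + Lfun n \<phi> (r-1) k, Lfun n \<phi> r (k-1)]) \<and>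
    (\<forall>k r. k \<le> n \<and> r \<le> n - k \<longrightarrow>
           elog (Spillage r n k \<phi>) =
             Lfun n \<phi> r k - logsumexp (map (\<lambda>j. Lfun n \<phi> j k) [0..<n-k+1]))"
proof (intro conjI allI impI)
  show "Lfun n \<phi> 0 0 = ereal (real n * ln \<phi>)"
    using assms by (simp add: Lfun_def elog_def)
next
  fix r assume "1 \<le> r \<and> r \<le> n"
  then obtain r' where "r = Suc r'" by (metis Suc_le_D One_nat_def)
  then show "Lfun n \<phi> r 0 = -\<infinity>"
    using assms by (simp add: L_eq TT_def elog_def)
next
  fix k assume k: "k \<le> n"
  then have "real (n choose k) > 0" by simp
  then show "Lfun n \<phi> 0 k = ereal (ln (real (n choose k)) + real (n-k) * ln \<phi>)"
    using assms by (simp add: Lfun_def elog_def)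
next
  fix r k assume h: "1 \<le> r \<and> 1 \<le> k \<and> k + r \<le> n"
  define c where "c = ln (real (n-k-r+1)) - ln (real (k+r)) - ln \<phi>"
  have ec: "exp c = real (n-k-r+1) / (real (k+r) * \<phi>)"
    using h assms unfolding c_def by (simp add: exp_diff)
  have "ereal (ln (real k)) + Lfun n \<phi> (r-1) k = elog (real k * TT n \<phi> (r-1) k)"
    using h assms by (simp add: L_eq elog_mult TT_nonneg elog_def[of "real k"])
  then have "logsumexp [ereal (ln (real k)) + Lfun n \<phi> (r-1) k, Lfun n \<phi> r (k-1)]
      = elog (real k * TT n \<phi> (r-1) k + TT n \<phi> r (k-1))"
    using assms by (simp add: logsumexp_def L_eq eexp_elog TT_nonneg)
  then have "ereal c + logsumexp [ereal (ln (real k)) + Lfun n \<phi> (r-1) k, Lfun n \<phi> r (k-1)]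
      = elog (exp c * (real k * TT n \<phi> (r-1) k + TT n \<phi> r (k-1)))"
    using assms by (simp add: elog_mult elog_exp TT_nonneg)
  also have "\<dots> = Lfun n \<phi> r k"
    using TT_rec[of \<phi> k r n] h assms by (simp add: ec L_eq)
  finally show "Lfun n \<phi> r k = ereal (ln (real (n-k-r+1)) - ln (real (k+r)) - ln \<phi>)
             + logsumexp [ereal (ln (real k)) + Lfun n \<phi> (r-1) k, Lfun n \<phi> r (k-1)]"
    unfolding c_def by simp
next
  fix k r assume h: "k \<le> n \<and> r \<le> n - k"
  define N where "N = ncStirling n k \<phi>"
  have N: "N = (\<Sum>j=0..n-k. TT n \<phi> j k)" unfolding N_def ncStirling_def TT_def ..
  have "TT n \<phi> 0 k > 0" using h assms by (simp add: TT_def)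
  moreover have "TT n \<phi> 0 k \<le> N" unfolding N
    by (rule member_le_sum) (use assms TT_nonneg in auto)
  ultimately have Np: "N > 0" by linarith
  have ls: "logsumexp (map (\<lambda>j. Lfun n \<phi> j k) [0..<n-k+1]) = ereal (ln N)"
  proof -
    have "sum_list (map eexp (map (\<lambda>j. Lfun n \<phi> j k) [0..<n-k+1]))
        = sum_list (map (\<lambda>j. TT n \<phi> j k) [0..<n-k+1])"
      using assms by (simp add: L_eq eexp_elog TT_nonneg o_def)
    also have "\<dots> = N" unfolding N
      by (simp only: interv_sum_list_conv_sum_set_nat set_upt Suc_eq_plus1[symmetric] atLeastLessThanSuc_atLeastAtMost)
    finally show ?thesis using Np by (simp add: logsumexp_def elog_def)
  qed
  have sp: "Spillage r n k \<phi> = TT n \<phi> r k * exp (- ln N)"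
    using Np by (simp add: Spillage_def TT_def N_def exp_minus divide_inverse)
  show "elog (Spillage r n k \<phi>) =
             Lfun n \<phi> r k - logsumexp (map (\<lambda>j. Lfun n \<phi> j k) [0..<n-k+1])"
    unfolding sp ls using assms
    by (simp add: elog_mult TT_nonneg elog_exp L_eq minus_ereal_def)
qed

end
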